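(* Let $g$ be a nontrivial isometry of a $\delta$-hyperbolic space $(X,d)$. Then: (i) $\ell(g)\le s(g)\le\ell(g)+\delta$; (ii) if $s(g)>\delta$, then for every $p\in\mathbb N^*$ and every $x\in X$, $d(x,g^{2^p}x)\ge d(x,gx)+(2^p-1)(s(g)-\delta)$; (iii) if $s(g)>3\delta$, then for every $x\in X$ the sequence $\big(d(x,g^nx)\big)_{n\in\mathbb N^*}$ is strictly increasing.
   Context: $s(g)=\inf_{x\in X}d(x,gx)$ and $\ell(g)=\lim_{k\to\infty}\frac1kd(x,g^kx)$. A $\delta$-hyperbolic space is a geodesic proper metric space all of whose geodesic triangles are $\delta$-thin: for a triangle with vertices $x,y,z$, map it onto the tripod with edges of lengths the Gromov products $(y|z)_x=\frac12(d(x,y)+d(x,z)-d(y,z))$ etc., isometrically on each side and vertices to ends; points with the same image are at distance $\le\delta$. *)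

theory Defs
  imports "HOL-Analysis.Analysis"
begin

definition gromov_product :: "'a::metric_space \<Rightarrow> 'a \<Rightarrow> 'a \<Rightarrow> real" where
  "gromov_product y z x = (dist x y + dist x z - dist y z) / 2"

definition geodesic_segment :: "(real \<Rightarrow> 'a::metric_space) \<Rightarrow> 'a \<Rightarrow> 'a \<Rightarrow> bool" where
  "geodesic_segment c x y \<longleftrightarrow> c 0 = x \<and> c (dist x y) = y \<and>
     (\<forall>s\<in>{0..dist x y}. \<forall>t\<in>{0..dist x y}. dist (c s) (c t) = \<bar>s - t\<bar>)"

definition geodesic_space :: "'a::metric_space itself \<Rightarrow> bool" where
  "geodesic_space _ \<longleftrightarrow> (\<forall>x y::'a. \<exists>c. geodesic_segment c x y)"

definition proper_space :: "'a::metric_space itself \<Rightarrow> bool" where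
  "proper_space _ \<longleftrightarrow> (\<forall>(x::'a) r. compact (cball x r))"

text \<open>Geodesic triangle with vertices x,y,z and sides cxy (from x to y), cyz (from y to z),
  czx (from z to x) is delta-thin: the tripod map (with legs of lengths the Gromov products,
  isometric on each side) identifies only points of two sides at equal distance t from the
  common vertex with t at most the Gromov product at that vertex; such points are delta-close.\<close>
definition thin_triangle :: "real \<Rightarrow> 'a::metric_space \<Rightarrow> 'a \<Rightarrow> 'a \<Rightarrow>
    (real \<Rightarrow> 'a) \<Rightarrow> (real \<Rightarrow> 'a) \<Rightarrow> (real \<Rightarrow> 'a) \<Rightarrow> bool" where
  "thin_triangle \<delta> x y z cxy cyz czx \<longleftrightarrow>
     (\<forall>t\<in>{0..gromov_product y z x}. dist (cxy t) (czx (dist z x - t)) \<le> \<delta>) \<and>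
     (\<forall>t\<in>{0..gromov_product z x y}. dist (cyz t) (cxy (dist x y - t)) \<le> \<delta>) \<and>
     (\<forall>t\<in>{0..gromov_product x y z}. dist (czx t) (cyz (dist y z - t)) \<le> \<delta>)"

definition delta_hyperbolic :: "real \<Rightarrow> 'a::metric_space itself \<Rightarrow> bool" where
  "delta_hyperbolic \<delta> T \<longleftrightarrow> geodesic_space T \<and> proper_space T \<and>
     (\<forall>(x::'a) y z cxy cyz czx. geodesic_segment cxy x y \<and> geodesic_segment cyz y z \<and>
        geodesic_segment czx z x \<longrightarrow> thin_triangle \<delta> x y z cxy cyz czx)"

definition isometry :: "('a::metric_space \<Rightarrow> 'a) \<Rightarrow> bool" where
  "isometry g \<longleftrightarrow> bij g \<and> (\<forall>x y. dist (g x) (g y) = dist x y)"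

definition min_displacement :: "('a::metric_space \<Rightarrow> 'a) \<Rightarrow> real" where
  "min_displacement g = (INF x. dist x (g x))"

text \<open>l(g) = lim_k d(x, g^k x)/k, computed from base point x (independent of x).\<close>
definition stable_length :: "('a::metric_space \<Rightarrow> 'a) \<Rightarrow> 'a \<Rightarrow> real" where
  "stable_length g x = lim (\<lambda>k. dist x ((g ^^ k) x) / real k)"

end

theory Submission
  imports Defs
begin


lemma gp_sym: "gromov_product y z x = gromov_product z y x"
  by (simp add: gromov_product_def dist_commute add.commute)

lemma gp_nonneg: "gromov_product y z x \<ge> 0"
  using dist_triangle[of y z x] by (simp add: gromov_product_def dist_commute)

lemma gp_le: "gromov_product y z x \<le> dist x y"
  using dist_triangle[of x z y] by (simp add: gromov_product_def dist_commute)

lemma geod_dist: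
  assumes "geodesic_segment c x y" "s \<in> {0..dist x y}" "t \<in> {0..dist x y}"
  shows "dist (c s) (c t) = \<bar>s - t\<bar>"
  using assms unfolding geodesic_segment_def by blast

lemma geod_end: "geodesic_segment c x y \<Longrightarrow> c 0 = x \<and> c (dist x y) = y"
  unfolding geodesic_segment_def by blast

lemma hyp_geod: "delta_hyperbolic \<delta> TYPE('a::metric_space) \<Longrightarrow> \<exists>c. geodesic_segment c (x::'a) y"
  unfolding delta_hyperbolic_def geodesic_space_def by blast

lemma hyp_thin: "delta_hyperbolic \<delta> TYPE('a::metric_space) \<Longrightarrow> geodesic_segment cxy (x::'a) y \<Longrightarrow>
   geodesic_segment cyz y z \<Longrightarrow> geodesic_segment czx z x \<Longrightarrow> thin_triangle \<delta> x y z cxy cyz czx"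
  unfolding delta_hyperbolic_def by blast

lemma four_point:
  fixes w x y z :: "'a::metric_space"
  assumes hyp: "delta_hyperbolic \<delta> TYPE('a)"
  shows "min (gromov_product x y w) (gromov_product y z w) - \<delta> \<le> gromov_product x z w"
proof -
  obtain cwx where cwx: "geodesic_segment cwx w x" using hyp_geod[OF hyp] by blast
  obtain cxy where cxy: "geodesic_segment cxy x y" using hyp_geod[OF hyp] by blast
  obtain cyw where cyw: "geodesic_segment cyw y w" using hyp_geod[OF hyp] by blast
  obtain cwz where cwz: "geodesic_segment cwz w z" using hyp_geod[OF hyp] by blast
  obtain czy where czy: "geodesic_segment czy z y" using hyp_geod[OF hyp] by blast
  have T1: "thin_triangle \<delta> w x y cwx cxy cyw" using hyp_thin[OF hyp cwx cxy cyw] .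
  have T2: "thin_triangle \<delta> y w z cyw cwz czy" using hyp_thin[OF hyp cyw cwz czy] .
  define t where "t = min (gromov_product x y w) (gromov_product y z w)"
  have t0: "t \<ge> 0" using gp_nonneg[of x y w] gp_nonneg[of y z w] by (simp add: t_def)
  have t1: "t \<le> dist w x" using gp_le[of x y w] by (simp add: t_def)
  have t2: "t \<le> dist w z" using gp_le[of z y w] gp_sym[of y z w] by (simp add: t_def)
  have d1: "dist (cwx t) (cyw (dist y w - t)) \<le> \<delta>"
    using T1 t0 unfolding thin_triangle_def t_def by auto
  have d2: "dist (cwz t) (cyw (dist y w - t)) \<le> \<delta>"
    using T2 t0 gp_sym[of y z w] unfolding thin_triangle_def t_def by auto
  have e1: "dist x (cwx t) = dist w x - t"
    using geod_dist[OF cwx, of "dist w x" t] geod_end[OF cwx] t0 t1 by auto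
  have e2: "dist (cwz t) z = dist w z - t"
    using geod_dist[OF cwz, of t "dist w z"] geod_end[OF cwz] t0 t2 by auto
  have "dist x z \<le> dist x (cwx t) + dist (cwx t) (cyw (dist y w - t)) + dist (cyw (dist y w - t)) (cwz t) + dist (cwz t) z"
    using dist_triangle[of x z "cwx t"] dist_triangle[of "cwx t" z "cyw (dist y w - t)"]
      dist_triangle[of "cyw (dist y w - t)" z "cwz t"] by linarith
  hence "dist x z \<le> dist w x - t + 2*\<delta> + (dist w z - t)"
    using e1 e2 d1 d2 by (simp add: dist_commute)
  hence "t - \<delta> \<le> gromov_product x z w" unfolding gromov_product_def by (simp add: field_simps)
  thus ?thesis by (simp add: t_def)
qed

lemma lemmaA:
  fixes h :: "'a::metric_space \<Rightarrow> 'a"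
  assumes hyp: "delta_hyperbolic \<delta> TYPE('a)" and iso: "\<And>u v. dist (h u) (h v) = dist u v"
  shows "\<exists>m. dist m (h m) \<le> \<delta> + max 0 (dist x (h (h x)) - dist x (h x))"
proof -
  define D where "D = dist x (h x)"
  define L where "L = dist x (h (h x))"
  obtain c where c: "geodesic_segment c x (h x)" using hyp_geod[OF hyp] by blast
  obtain czx where czx: "geodesic_segment czx (h (h x)) x" using hyp_geod[OF hyp] by blast
  have hc: "geodesic_segment (h \<circ> c) (h x) (h (h x))"
    using c iso unfolding geodesic_segment_def by auto
  have T: "thin_triangle \<delta> x (h x) (h (h x)) c (h \<circ> c) czx" using hyp_thin[OF hyp c hc czx] .
  define gp where "gp = gromov_product (h (h x)) x (h x)"
  have gpv: "gp = (2*D - L)/2"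
    unfolding gp_def gromov_product_def D_def L_def using iso[of x "h x"] by (simp add: dist_commute)
  have gp0: "gp \<ge> 0" using gp_nonneg unfolding gp_def by blast
  define t0 where "t0 = min (D/2) gp"
  have t00: "t0 \<ge> 0" using gp0 D_def by (simp add: t0_def)
  have cl: "\<forall>t\<in>{0..gp}. dist ((h \<circ> c) t) (c (D - t)) \<le> \<delta>"
    using T unfolding thin_triangle_def gp_def D_def by blast
  hence d: "dist (h (c t0)) (c (D - t0)) \<le> \<delta>" using t00 by (auto simp: t0_def)
  define m where "m = c (D/2)"
  have D0: "D \<ge> 0" by (simp add: D_def)
  have e1: "dist m (c (D - t0)) = D/2 - t0"
    using geod_dist[OF c, of "D/2" "D - t0"] t00 D0 unfolding m_def D_def[symmetric] by (auto simp: t0_def)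
  have e2: "dist (h (c t0)) (h m) = D/2 - t0"
    using geod_dist[OF c, of t0 "D/2"] t00 D0 iso unfolding m_def D_def[symmetric] by (auto simp: t0_def)
  have "dist m (h m) \<le> dist m (c (D - t0)) + dist (c (D - t0)) (h (c t0)) + dist (h (c t0)) (h m)"
    using dist_triangle[of m "h m" "c (D - t0)"] dist_triangle[of "c (D - t0)" "h m" "h (c t0)"] by linarith
  hence "dist m (h m) \<le> D - 2*t0 + \<delta>" using e1 e2 d by (simp add: dist_commute)
  moreover have "D - 2*t0 = max 0 (L - D)" using gpv by (auto simp: t0_def)
  ultimately have "dist m (h m) \<le> \<delta> + max 0 (L - D)" by linarith
  thus ?thesis unfolding D_def L_def by blast
qed



lemma iso_dist: "isometry g \<Longrightarrow> dist (g x) (g y) = dist x y"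
  unfolding isometry_def by blast

lemma iter_dist: "isometry g \<Longrightarrow> dist ((g^^n) x) ((g^^n) y) = dist x y"
  by (induction n) (auto simp: iso_dist)

lemma iter_pair: "isometry g \<Longrightarrow> dist ((g^^i) x) ((g^^(i+j)) x) = dist x ((g^^j) x)"
  by (metis comp_apply funpow_add iter_dist)

lemma subadd: "isometry g \<Longrightarrow> dist x ((g^^(i+j)) x) \<le> dist x ((g^^i) x) + dist x ((g^^j) x)"
  using dist_triangle[of x "(g^^(i+j)) x" "(g^^i) x"] iter_pair[of g i x j] by simp

lemma lin_bound: "isometry g \<Longrightarrow> dist x ((g^^k) x) \<le> real k * dist x (g x)"
proof (induction k)
  case (Suc k)
  have "dist x ((g^^(k+1)) x) \<le> dist x ((g^^k) x) + dist x ((g^^1) x)" using subadd[OF Suc.prems] .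
  thus ?case using Suc by (simp add: algebra_simps)
qed simp

lemma s_le: "min_displacement g \<le> dist y (g y)"
  unfolding min_displacement_def by (rule cINF_lower) (auto intro: bdd_belowI[of _ 0])

lemma s_ge: "(\<And>y. c \<le> dist y (g y)) \<Longrightarrow> c \<le> min_displacement g"
  unfolding min_displacement_def by (rule cINF_greatest) auto

lemma part2:
  fixes g :: "'a::metric_space \<Rightarrow> 'a"
  assumes hyp: "delta_hyperbolic \<delta> TYPE('a)" and iso: "isometry g"
    and sd: "min_displacement g > \<delta>"
  shows "dist x ((g ^^ (2 ^ p)) x) \<ge> dist x (g x) + (2 ^ p - 1) * (min_displacement g - \<delta>)"
proof (induction p arbitrary: x)
  case 0
  then show ?case by simp
next
  case (Suc p)
  define s where "s = min_displacement g"
  define h where "h = g ^^ (2^p)"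
  have hiso: "\<And>u v. dist (h u) (h v) = dist u v" unfolding h_def using iter_dist[OF iso] by blast
  have hh: "h (h x) = (g ^^ (2 ^ Suc p)) x"
    unfolding h_def by (simp add: funpow_add mult_2)
  obtain m where m: "dist m (h m) \<le> \<delta> + max 0 (dist x (h (h x)) - dist x (h x))"
    using lemmaA[OF hyp hiso] by blast
  have "dist m (h m) \<ge> s + (2 ^ p - 1) * (s - \<delta>)"
    using Suc.IH[of m] s_le[of g m] unfolding h_def s_def by linarith
  hence "max 0 (dist x (h (h x)) - dist x (h x)) \<ge> s - \<delta> + (2 ^ p - 1) * (s - \<delta>)"
    using m by linarith
  moreover have "s - \<delta> + (2 ^ p - 1) * (s - \<delta>) = 2^p * (s - \<delta>)" by (simp add: algebra_simps)
  moreover have "2^p * (s - \<delta>) > 0" using sd unfolding s_def by simp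
  ultimately have "dist x (h (h x)) - dist x (h x) \<ge> 2^p * (s - \<delta>)" by linarith
  moreover have "dist x (h x) \<ge> dist x (g x) + (2 ^ p - 1) * (s - \<delta>)"
    using Suc.IH[of x] unfolding h_def s_def .
  ultimately have "dist x (h (h x)) \<ge> dist x (g x) + (2 ^ Suc p - 1) * (s - \<delta>)"
    by (simp add: algebra_simps)
  thus ?case using hh s_def by simp
qed

lemma part3:
  fixes g :: "'a::metric_space \<Rightarrow> 'a"
  assumes hyp: "delta_hyperbolic \<delta> TYPE('a)" and iso: "isometry g"
    and sd: "min_displacement g > 3 * \<delta>"
  shows "dist x ((g ^^ n) x) < dist x ((g ^^ Suc n) x)"
proof (induction n)
  have "\<delta> \<ge> 0" using four_point[OF hyp, of x x x x] by (simp add: gromov_product_def)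
  hence "0 < dist x (g x)" using sd s_le[of g x] by linarith
  thus "dist x ((g ^^ 0) x) < dist x ((g ^^ Suc 0) x)" by simp
next
  case (Suc n)
  define s where "s = min_displacement g"
  define a where "a k = dist x ((g^^k) x)" for k
  define D where "D = a 1"
  define P where "P = x"
  define Q where "Q = (g^^n) x"
  define R where "R = (g^^(n+1)) x"
  define S where "S = (g^^(n+2)) x"
  have d0: "\<delta> \<ge> 0" using four_point[OF hyp, of x x x x] by (simp add: gromov_product_def)
  have a2: "a 2 \<ge> D + (s - \<delta>)"
    using part2[OF hyp iso, where p=1 and x=x] sd d0 unfolding a_def D_def s_def by simp
  have RQ: "dist R Q = D" using iter_pair[OF iso, of n x 1] unfolding R_def Q_def D_def a_def
    by (simp add: dist_commute)
  have RS: "dist R S = D" using iter_pair[OF iso, of "n+1" x 1] unfolding R_def S_def D_def a_def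
    by (simp add: numeral_2_eq_2)
  have QS: "dist Q S = a 2" using iter_pair[OF iso, of n x 2] unfolding S_def Q_def a_def
    by (simp add: add.commute)
  have RP: "dist R P = a (n+1)" unfolding R_def P_def a_def by (simp add: dist_commute)
  have QP: "dist Q P = a n" unfolding Q_def P_def a_def by (simp add: dist_commute)
  have SP: "dist P S = a (n+2)" unfolding S_def P_def a_def by simp
  have k: "min (gromov_product Q P R) (gromov_product P S R) - \<delta> \<le> gromov_product Q S R"
    using four_point[OF hyp] .
  have e1: "2 * gromov_product Q S R = 2*D - a 2" unfolding gromov_product_def using RQ RS QS by simp
  have e2: "2 * gromov_product Q P R = D + a (n+1) - a n" unfolding gromov_product_def using RQ RP QP by simp
  have e3: "2 * gromov_product P S R = a (n+1) + D - a (n+2)" unfolding gromov_product_def using RS RP SP by simp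
  have an: "a n < a (n+1)" using Suc unfolding a_def by simp
  have f1: "2 * gromov_product Q S R + 2 * \<delta> < D" using e1 a2 sd unfolding s_def by linarith
  have f2: "2 * gromov_product Q P R > D" using e2 an by linarith
  have "2 * min (gromov_product Q P R) (gromov_product P S R) < D" using k f1 by linarith
  hence "2 * gromov_product P S R < D" using f2 by (auto simp: min_def split: if_splits)
  hence "a (n+1) < a (n+2)" using e3 by linarith
  thus ?case unfolding a_def by simp
qed



lemma mult_bound:
  assumes sub: "\<And>i j. A (i+j) \<le> A i + A j" and A0: "A 0 = (0::real)"
  shows "A (q*m) \<le> real q * A m"
proof (induction q)
  case (Suc q)
  have "A (m + q*m) \<le> A m + A (q*m)" using sub .
  thus ?case using Suc by (simp add: algebra_simps)
qed (simp add: A0)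

lemma fekete:
  assumes sub: "\<And>i j. A (i+j) \<le> A i + A j" and nn: "\<And>i. A i \<ge> (0::real)" and A0: "A 0 = 0"
  shows "convergent (\<lambda>k. A k / real k)"
proof -
  have lin: "A r \<le> real r * A 1" for r
  proof (induction r)
    case (Suc r)
    have "A (r + 1) \<le> A r + A 1" using sub .
    thus ?case using Suc by (simp add: algebra_simps)
  qed (simp add: A0)
  define L where "L = (INF k\<in>{1..}. A k / real k)"
  have bdd: "bdd_below ((\<lambda>k. A k / real k) ` {1..})" by (rule bdd_belowI[of _ 0]) (auto simp: nn)
  have Lle: "L \<le> A k / real k" if "k \<ge> 1" for k
    unfolding L_def using that bdd by (auto intro: cINF_lower)
  have "(\<lambda>k. A k / real k) \<longlonglongrightarrow> L"
  proof (rule LIMSEQ_I)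
    fix e :: real assume e: "e > 0"
    have "\<exists>m\<in>{1..}. A m / real m < L + e/2"
      using cINF_less_iff[OF _ bdd, of "L + e/2"] e unfolding L_def by simp
    then obtain m where m1: "m \<ge> 1" and mL: "A m / real m < L + e/2" by auto
    obtain N :: nat where N: "N > real m * A 1 * 2 / e" using reals_Archimedean2 by blast
    show "\<exists>N. \<forall>k\<ge>N. norm (A k / real k - L) < e"
    proof (intro exI[of _ "max N 1"] allI impI)
      fix k assume k: "max N 1 \<le> k"
      hence k1: "k \<ge> 1" and kN: "k \<ge> N" by auto
      define q where "q = k div m"
      define r where "r = k mod m"
      have kqr: "k = q*m + r" unfolding q_def r_def by simp
      have rm: "r < m" unfolding r_def using m1 by simp
      have "A k \<le> A (q*m) + A r" using kqr sub by metis
      also have "\<dots> \<le> real q * A m + real r * A 1" using mult_bound[OF sub A0] lin by (meson add_mono)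
      also have "\<dots> \<le> real q * A m + real m * A 1" using rm nn[of 1]
        by (simp add: mult_right_mono)
      finally have Ak: "A k \<le> real q * A m + real m * A 1" .
      have kpos: "real k > 0" using k1 by simp
      have "real q * real m \<le> real k" using kqr by (metis of_nat_le_iff of_nat_mult le_add1)
      hence "real q * A m / real k \<le> A m / real m"
        using m1 nn[of m] kpos by (simp add: field_simps) (metis mult.commute mult_right_mono)
      moreover have "real m * A 1 / real k < e/2"
      proof -
        have "real m * A 1 * 2 / e < real k" using N kN by linarith
        hence "real m * A 1 * 2 < real k * e" using e by (simp add: field_simps)
        thus ?thesis using kpos by (simp add: field_simps)
      qed
      moreover have "A k / real k \<le> real q * A m / real k + real m * A 1 / real k"
        using Ak kpos by (simp add: add_divide_distrib[symmetric] divide_right_mono)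
      ultimately have "A k / real k < L + e" using mL by linarith
      moreover have "L \<le> A k / real k" using Lle k1 .
      ultimately show "norm (A k / real k - L) < e" by simp
    qed
  qed
  thus ?thesis unfolding convergent_def by blast
qed



lemma stable_conv:
  assumes iso: "isometry g"
  shows "(\<lambda>k. dist x ((g^^k) x) / real k) \<longlonglongrightarrow> stable_length g x"
proof -
  have "convergent (\<lambda>k. dist x ((g^^k) x) / real k)"
    by (rule fekete) (use subadd[OF iso] in auto)
  thus ?thesis unfolding stable_length_def convergent_LIMSEQ_iff .
qed

lemma part1a:
  assumes iso: "isometry g"
  shows "stable_length g x \<le> dist y (g y)"
proof -
  have lim2: "(\<lambda>k. 2 * dist x y * (1 / real k) + dist y (g y)) \<longlonglongrightarrow> 2 * dist x y * 0 + dist y (g y)"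
    by (intro tendsto_intros lim_inverse_n')
  have "\<forall>k\<ge>1. dist x ((g^^k) x) / real k \<le> 2 * dist x y * (1 / real k) + dist y (g y)"
  proof (intro allI impI)
    fix k :: nat assume k: "k \<ge> 1"
    have "dist x ((g^^k) x) \<le> dist x y + dist y ((g^^k) y) + dist ((g^^k) y) ((g^^k) x)"
      using dist_triangle[of x "(g^^k) x" y] dist_triangle[of y "(g^^k) x" "(g^^k) y"] by linarith
    also have "\<dots> \<le> 2 * dist x y + real k * dist y (g y)"
      using iter_dist[OF iso, of k y x] lin_bound[OF iso, of y k] by (simp add: dist_commute)
    finally have "dist x ((g^^k) x) \<le> 2 * dist x y + real k * dist y (g y)" .
    thus "dist x ((g^^k) x) / real k \<le> 2 * dist x y * (1 / real k) + dist y (g y)"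
      using k by (simp add: field_simps)
  qed
  hence "stable_length g x \<le> 2 * dist x y * 0 + dist y (g y)"
    using LIMSEQ_le[OF stable_conv[OF iso] lim2] by blast
  thus ?thesis by simp
qed

lemma part1b:
  fixes g :: "'a::metric_space \<Rightarrow> 'a"
  assumes hyp: "delta_hyperbolic \<delta> TYPE('a)" and iso: "isometry g"
  shows "min_displacement g \<le> stable_length g x + \<delta>"
proof -
  define s where "s = min_displacement g"
  have l0: "stable_length g x \<ge> 0"
    by (rule LIMSEQ_le_const[OF stable_conv[OF iso]]) auto
  show ?thesis
  proof (cases "s > \<delta>")
    case False thus ?thesis using l0 s_def by linarith
  next
    case True
    have sm: "strict_mono (\<lambda>p::nat. (2::nat)^p)" unfolding strict_mono_def by simp
    have lim1: "(\<lambda>p. dist x ((g^^(2^p)) x) / real (2^p)) \<longlonglongrightarrow> stable_length g x"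
      using LIMSEQ_subseq_LIMSEQ[OF stable_conv[OF iso] sm] by (simp add: comp_def)
    have lim2: "(\<lambda>p. (s - \<delta>) - (s - \<delta>) * (1/2::real)^p) \<longlonglongrightarrow> (s - \<delta>) - (s - \<delta>) * 0"
      by (intro tendsto_intros LIMSEQ_realpow_zero) auto
    have "\<forall>p\<ge>0. (s - \<delta>) - (s - \<delta>) * (1/2::real)^p \<le> dist x ((g^^(2^p)) x) / real (2^p)"
    proof (intro allI impI)
      fix p :: nat
      have "dist x ((g^^(2^p)) x) \<ge> dist x (g x) + (2 ^ p - 1) * (s - \<delta>)"
        using part2[OF hyp iso] True unfolding s_def by blast
      hence h: "dist x ((g^^(2^p)) x) \<ge> (2 ^ p - 1) * (s - \<delta>)" by (smt (verit) zero_le_dist)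
      have pp: "(2::real)^p > 0" by simp
      have "(s - \<delta>) - (s - \<delta>) * (1/2::real)^p = (2 ^ p - 1) * (s - \<delta>) / 2^p"
        using pp by (simp add: field_simps power_divide)
      also have "\<dots> \<le> dist x ((g^^(2^p)) x) / 2^p" using h pp by (simp add: divide_right_mono)
      finally show "(s - \<delta>) - (s - \<delta>) * (1/2::real)^p \<le> dist x ((g^^(2^p)) x) / real (2^p)"
        by simp
    qed
    hence "(s - \<delta>) - (s - \<delta>) * 0 \<le> stable_length g x" using LIMSEQ_le[OF lim2 lim1] by blast
    thus ?thesis unfolding s_def by simp
  qed
qed

theorem lemma8p15:
  fixes g :: "'a::metric_space \<Rightarrow> 'a" and \<delta> :: real
  assumes hyp: "delta_hyperbolic \<delta> TYPE('a)"
    and iso: "isometry g"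
    and nontriv: "g \<noteq> id"
  shows "(\<forall>x. stable_length g x \<le> min_displacement g \<and>
              min_displacement g \<le> stable_length g x + \<delta>)
    \<and> (min_displacement g > \<delta> \<longrightarrow>
         (\<forall>p::nat. p \<ge> 1 \<longrightarrow> (\<forall>x.
            dist x ((g ^^ (2 ^ p)) x) \<ge> dist x (g x) + (2 ^ p - 1) * (min_displacement g - \<delta>))))
    \<and> (min_displacement g > 3 * \<delta> \<longrightarrow>
         (\<forall>x. \<forall>n::nat. n \<ge> 1 \<longrightarrow> dist x ((g ^^ n) x) < dist x ((g ^^ Suc n) x)))"
  using part1a[OF iso] s_ge part1b[OF hyp iso] part2[OF hyp iso] part3[OF hyp iso] by blast

end
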